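(* Let $G=K(n_1,\dots,n_s)$ be a complete $s$-partite graph ($s\ge 2$) with parts $V_1,\dots,V_s$, $|V_j|=n_j$, and suppose at least one part has at least $6$ vertices. Then there exist an optimal $3$-relaxed coloring $f$ of $G$ and a part $V_j$ with $n_j\ge 6$ such that $|f(V_j)|=1$.
   Context: A map $f$ from $V(G)$ to a finite set of colors is a $3$-relaxed coloring if every vertex $u$ has at most $3$ neighbors $v$ with $f(v)=f(u)$; $\chi_3(G)$ is the minimum number of colors in such a coloring, and a $3$-relaxed coloring using $\chi_3(G)$ colors is optimal. $f(S)$ denotes the set of colors used on $S$. *)

theory Defs
  imports Main
begin

text \<open>Simple graphs are given by a vertex set V and a symmetric irreflexive
adjacency relation E. Colours are natural numbers; the number of colours used
by f is card (f ` V).\<close>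

definition relaxed_coloring :: "nat \<Rightarrow> 'a set \<Rightarrow> ('a \<Rightarrow> 'a \<Rightarrow> bool) \<Rightarrow> ('a \<Rightarrow> nat) \<Rightarrow> bool" where
  "relaxed_coloring k V E f \<longleftrightarrow> (\<forall>u\<in>V. card {v\<in>V. E u v \<and> f v = f u} \<le> k)"

definition relaxed_chromatic :: "nat \<Rightarrow> 'a set \<Rightarrow> ('a \<Rightarrow> 'a \<Rightarrow> bool) \<Rightarrow> nat" where
  "relaxed_chromatic k V E = (LEAST m. \<exists>f. relaxed_coloring k V E f \<and> card (f ` V) = m)"

definition optimal_relaxed_coloring :: "nat \<Rightarrow> 'a set \<Rightarrow> ('a \<Rightarrow> 'a \<Rightarrow> bool) \<Rightarrow> ('a \<Rightarrow> nat) \<Rightarrow> bool" where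
  "optimal_relaxed_coloring k V E f \<longleftrightarrow>
     relaxed_coloring k V E f \<and> card (f ` V) = relaxed_chromatic k V E"

text \<open>Complete s-partite graph K(n_0,...,n_{s-1}): vertex (j,i) is the i-th vertex
of part j; parts are V_j = {(j,i). i < n j}.\<close>

definition cmp_vertices :: "nat \<Rightarrow> (nat \<Rightarrow> nat) \<Rightarrow> (nat \<times> nat) set" where
  "cmp_vertices s n = {(j, i). j < s \<and> i < n j}"

definition cmp_part :: "(nat \<Rightarrow> nat) \<Rightarrow> nat \<Rightarrow> (nat \<times> nat) set" where
  "cmp_part n j = {(j, i) | i. i < n j}"

definition cmp_adj :: "nat \<times> nat \<Rightarrow> nat \<times> nat \<Rightarrow> bool" where
  "cmp_adj u v \<longleftrightarrow> fst u \<noteq> fst v"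

end

theory Submission
  imports Defs
begin

lemma rc_iff:
  "relaxed_coloring 3 V cmp_adj f \<longleftrightarrow> (\<forall>u\<in>V. card {v\<in>V. fst u \<noteq> fst v \<and> f v = f u} \<le> 3)"
  by (simp add: relaxed_coloring_def cmp_adj_def)

lemma fiber_sum:
  assumes "finite S" "f ` S \<subseteq> A" "finite A"
  shows "card S = (\<Sum>c\<in>A. card {v\<in>S. f v = c})"
proof -
  have "S = (\<Union>c\<in>A. {v\<in>S. f v = c})" using assms(2) by auto
  then have "card S = card (\<Union>c\<in>A. {v\<in>S. f v = c})" by simp
  also have "\<dots> = (\<Sum>c\<in>A. card {v\<in>S. f v = c})"
    by (rule card_UN_disjoint) (use assms in auto)
  finally show ?thesis .
qed

lemma pure_case:
  fixes V :: "(nat \<times> nat) set" and f :: "nat \<times> nat \<Rightarrow> nat"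
  assumes fin: "finite V" and rc: "relaxed_coloring 3 V cmp_adj f"
    and a: "a \<in> f ` {v\<in>V. fst v = j}"
    and pure: "\<forall>w\<in>V. fst w \<noteq> j \<longrightarrow> f w \<noteq> a"
  shows "\<exists>g. relaxed_coloring 3 V cmp_adj g \<and> g ` V \<subseteq> f ` V \<and> g ` {v\<in>V. fst v = j} = {a}"
proof -
  define g where "g v = (if fst v = j then a else f v)" for v
  have "relaxed_coloring 3 V cmp_adj g"
    unfolding rc_iff
  proof
    fix u assume u: "u \<in> V"
    show "card {v\<in>V. fst u \<noteq> fst v \<and> g v = g u} \<le> 3"
    proof (cases "fst u = j")
      case True
      then have "{v\<in>V. fst u \<noteq> fst v \<and> g v = g u} = {}"
        using pure by (auto simp: g_def)
      then show ?thesis by (metis card.empty zero_le)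
    next
      case False
      have "{v\<in>V. fst u \<noteq> fst v \<and> g v = g u} \<subseteq> {v\<in>V. fst u \<noteq> fst v \<and> f v = f u}"
        using False pure u by (auto simp: g_def split: if_splits)
      then have "card {v\<in>V. fst u \<noteq> fst v \<and> g v = g u} \<le> card {v\<in>V. fst u \<noteq> fst v \<and> f v = f u}"
        by (rule card_mono[rotated]) (use fin in auto)
      also have "\<dots> \<le> 3" using rc u unfolding rc_iff by auto
      finally show ?thesis .
    qed
  qed
  moreover have "g ` V \<subseteq> f ` V" using a by (auto simp: g_def)
  moreover have "g ` {v\<in>V. fst v = j} = {a}" using a by (auto simp: g_def)
  ultimately show ?thesis by blast
qed

definition good :: "(nat \<times> nat) set \<Rightarrow> bool" where
  "good S \<longleftrightarrow> (\<forall>u\<in>S. card {v\<in>S. fst v \<noteq> fst u} \<le> 3)"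

lemma merge_case:
  fixes V :: "(nat \<times> nat) set" and f :: "nat \<times> nat \<Rightarrow> nat"
  assumes fin: "finite V" and rc: "relaxed_coloring 3 V cmp_adj f"
    and a: "a \<in> f ` {v\<in>V. fst v = j}" and b: "b \<in> f ` V" and ab: "a \<noteq> b"
    and gd: "good ({v\<in>V. fst v \<noteq> j \<and> f v = a} \<union> {v\<in>V. fst v \<noteq> j \<and> f v = b})"
  shows "\<exists>g. relaxed_coloring 3 V cmp_adj g \<and> g ` V \<subseteq> f ` V \<and> g ` {v\<in>V. fst v = j} = {a}"
proof -
  define g where "g v = (if fst v = j then a else if f v = a then b else f v)" for v
  have "relaxed_coloring 3 V cmp_adj g"
    unfolding rc_iff
  proof
    fix u assume u: "u \<in> V"
    show "card {v\<in>V. fst u \<noteq> fst v \<and> g v = g u} \<le> 3"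
    proof (cases "fst u = j")
      case True
      then have "{v\<in>V. fst u \<noteq> fst v \<and> g v = g u} = {}"
        using ab by (auto simp: g_def)
      then show ?thesis by (metis card.empty zero_le)
    next
      case False
      show ?thesis
      proof (cases "f u = a \<or> f u = b")
        case True
        let ?O = "{v\<in>V. fst v \<noteq> j \<and> f v = a} \<union> {v\<in>V. fst v \<noteq> j \<and> f v = b}"
        have "{v\<in>V. fst u \<noteq> fst v \<and> g v = g u} \<subseteq> {v\<in>?O. fst v \<noteq> fst u}"
          using False True ab by (auto simp: g_def split: if_splits)
        then have "card {v\<in>V. fst u \<noteq> fst v \<and> g v = g u} \<le> card {v\<in>?O. fst v \<noteq> fst u}"
          by (rule card_mono[rotated]) (use fin in auto)
        also have "\<dots> \<le> 3" using gd u False True unfolding good_def by auto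
        finally show ?thesis .
      next
        case nab: False
        have "{v\<in>V. fst u \<noteq> fst v \<and> g v = g u} \<subseteq> {v\<in>V. fst u \<noteq> fst v \<and> f v = f u}"
          using False nab u by (auto simp: g_def split: if_splits)
        then have "card {v\<in>V. fst u \<noteq> fst v \<and> g v = g u} \<le> card {v\<in>V. fst u \<noteq> fst v \<and> f v = f u}"
          by (rule card_mono[rotated]) (use fin in auto)
        also have "\<dots> \<le> 3" using rc u unfolding rc_iff by auto
        finally show ?thesis .
      qed
    qed
  qed
  moreover have "g ` V \<subseteq> f ` V" using a b by (auto simp: g_def)
  moreover have "g ` {v\<in>V. fst v = j} = {a}" using a by (auto simp: g_def)
  ultimately show ?thesis by blast
qed


lemma chunk_case:
  fixes V :: "(nat \<times> nat) set" and f :: "nat \<times> nat \<Rightarrow> nat"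
  assumes fin: "finite V" and rc: "relaxed_coloring 3 V cmp_adj f"
    and a0: "a0 \<in> f ` {v\<in>V. fst v = j}"
    and cW: "card {v\<in>V. fst v \<noteq> j \<and> f v \<in> f ` {v\<in>V. fst v = j}}
               \<le> 4 * (card (f ` {v\<in>V. fst v = j}) - 1)"
  shows "\<exists>g. relaxed_coloring 3 V cmp_adj g \<and> g ` V \<subseteq> f ` V \<and> g ` {v\<in>V. fst v = j} = {a0}"
proof -
  define A where "A = f ` {v\<in>V. fst v = j}"
  define W where "W = {v\<in>V. fst v \<noteq> j \<and> f v \<in> A}"
  have finA: "finite A" using fin unfolding A_def by auto
  have finW: "finite W" using fin unfolding W_def by auto
  obtain idx where idx: "bij_betw idx W {0..<card W}" using ex_bij_betw_finite_nat[OF finW] by blast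
  have cA: "card (A - {a0}) = card A - 1" using a0 finA unfolding A_def by simp
  obtain col where col: "bij_betw col {0..<card A - 1} (A - {a0})"
    using ex_bij_betw_nat_finite[of "A - {a0}"] finA cA by auto
  have cW': "card W \<le> 4 * (card A - 1)" using cW unfolding W_def A_def by simp
  have colW: "col (idx v div 4) \<in> A - {a0}" if "v \<in> W" for v
  proof -
    have "idx v < card W" using idx that unfolding bij_betw_def by auto
    then have "idx v div 4 < card A - 1" using cW' by linarith
    then show ?thesis using col unfolding bij_betw_def by auto
  qed
  have chunk: "card {v\<in>W. idx v div 4 = d} \<le> 4" for d
  proof -
    have inj: "inj_on idx {v\<in>W. idx v div 4 = d}"
      using idx unfolding bij_betw_def by (auto intro: inj_on_subset)
    have "idx ` {v\<in>W. idx v div 4 = d} \<subseteq> {4*d..<4*d+4}" by auto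
    then have "card (idx ` {v\<in>W. idx v div 4 = d}) \<le> 4"
      by (metis (no_types, lifting) card_atLeastLessThan card_mono diff_add_inverse finite_atLeastLessThan)
    then show ?thesis using card_image[OF inj] by simp
  qed
  define g where "g v = (if fst v = j then a0 else if f v \<in> A then col (idx v div 4) else f v)" for v
  have a0A: "a0 \<in> A" using a0 unfolding A_def by simp
  have "relaxed_coloring 3 V cmp_adj g"
    unfolding rc_iff
  proof
    fix u assume u: "u \<in> V"
    show "card {v\<in>V. fst u \<noteq> fst v \<and> g v = g u} \<le> 3"
    proof (cases "fst u = j")
      case True
      have "{v\<in>V. fst u \<noteq> fst v \<and> g v = g u} = {}"
      proof (rule ccontr)
        assume "{v\<in>V. fst u \<noteq> fst v \<and> g v = g u} \<noteq> {}"
        then obtain v where v: "v \<in> V" "fst v \<noteq> j" "g v = a0" using True by (auto simp: g_def)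
        show False
        proof (cases "f v \<in> A")
          case True
          then have "v \<in> W" using v unfolding W_def by auto
          then show False using colW[of v] v True by (auto simp: g_def)
        next
          case False
          then show False using v a0A by (auto simp: g_def)
        qed
      qed
      then show ?thesis by (metis card.empty zero_le)
    next
      case False
      show ?thesis
      proof (cases "f u \<in> A")
        case True
        have uW: "u \<in> W" using u False True unfolding W_def by auto
        have "{v\<in>V. fst u \<noteq> fst v \<and> g v = g u} \<subseteq> {v\<in>W. idx v div 4 = idx u div 4} - {u}"
        proof
          fix v assume v: "v \<in> {v\<in>V. fst u \<noteq> fst v \<and> g v = g u}"
          have gu: "g u = col (idx u div 4)" using False True by (simp add: g_def)
          have nj: "fst v \<noteq> j"
            using v colW[OF uW] gu by (auto simp: g_def)
          have fA: "f v \<in> A"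
          proof (rule ccontr)
            assume "f v \<notin> A"
            then have "g v = f v" using nj by (simp add: g_def)
            then show False using v colW[OF uW] gu \<open>f v \<notin> A\<close> by auto
          qed
          have vW: "v \<in> W" using v nj fA unfolding W_def by auto
          have "col (idx v div 4) = col (idx u div 4)" using v gu nj fA by (simp add: g_def)
          moreover have "idx v div 4 \<in> {0..<card A - 1}" "idx u div 4 \<in> {0..<card A - 1}"
          proof -
            have "idx v < card W" "idx u < card W" using idx vW uW unfolding bij_betw_def by auto
            then show "idx v div 4 \<in> {0..<card A - 1}" "idx u div 4 \<in> {0..<card A - 1}"
              using cW' by auto
          qed
          ultimately have "idx v div 4 = idx u div 4"
            using col unfolding bij_betw_def inj_on_def by blast
          then show "v \<in> {v\<in>W. idx v div 4 = idx u div 4} - {u}" using vW v by auto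
        qed
        then have "card {v\<in>V. fst u \<noteq> fst v \<and> g v = g u} \<le> card ({v\<in>W. idx v div 4 = idx u div 4} - {u})"
          by (rule card_mono[rotated]) (use finW in auto)
        also have "\<dots> = card {v\<in>W. idx v div 4 = idx u div 4} - 1"
          using uW finW by (simp add: card_Diff_singleton)
        also have "\<dots> \<le> 3" using chunk[of "idx u div 4"] by linarith
        finally show ?thesis .
      next
        case nA: False
        have "{v\<in>V. fst u \<noteq> fst v \<and> g v = g u} \<subseteq> {v\<in>V. fst u \<noteq> fst v \<and> f v = f u}"
        proof
          fix v assume v: "v \<in> {v\<in>V. fst u \<noteq> fst v \<and> g v = g u}"
          have gu: "g u = f u" using False nA by (simp add: g_def)
          have nj: "fst v \<noteq> j" using v gu nA a0A by (auto simp: g_def)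
          have fA: "f v \<notin> A"
          proof
            assume "f v \<in> A"
            then have "v \<in> W" using v nj unfolding W_def by auto
            then show False using colW[of v] v gu nA nj \<open>f v \<in> A\<close> by (auto simp: g_def)
          qed
          show "v \<in> {v\<in>V. fst u \<noteq> fst v \<and> f v = f u}" using v gu nj fA by (auto simp: g_def)
        qed
        then have "card {v\<in>V. fst u \<noteq> fst v \<and> g v = g u} \<le> card {v\<in>V. fst u \<noteq> fst v \<and> f v = f u}"
          by (rule card_mono[rotated]) (use fin in auto)
        also have "\<dots> \<le> 3" using rc u unfolding rc_iff by auto
        finally show ?thesis .
      qed
    qed
  qed
  moreover have "g ` V \<subseteq> f ` V"
  proof
    fix x assume "x \<in> g ` V"
    then obtain v where v: "v \<in> V" "x = g v" by auto
    have "A \<subseteq> f ` V" unfolding A_def by auto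
    show "x \<in> f ` V"
    proof (cases "fst v = j")
      case True then show ?thesis using v a0A \<open>A \<subseteq> f ` V\<close> by (auto simp: g_def)
    next
      case False
      show ?thesis
      proof (cases "f v \<in> A")
        case True
        then have "v \<in> W" using v False unfolding W_def by auto
        then show ?thesis using colW[of v] v False True \<open>A \<subseteq> f ` V\<close> by (auto simp: g_def)
      qed (use v False in \<open>auto simp: g_def\<close>)
    qed
  qed
  moreover have "g ` {v\<in>V. fst v = j} = {a0}" using a0 by (auto simp: g_def)
  ultimately show ?thesis by blast
qed


lemma class_facts:
  fixes V :: "(nat \<times> nat) set" and f :: "nat \<times> nat \<Rightarrow> nat"
  assumes fin: "finite V" and rc: "relaxed_coloring 3 V cmp_adj f"
    and c: "c \<in> f ` {v\<in>V. fst v = j}"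
  shows "card {v\<in>V. fst v \<noteq> j \<and> f v = c} \<le> 3"
    and "{v\<in>V. fst v \<noteq> j \<and> f v = c} \<noteq> {} \<Longrightarrow> card {v\<in>V. fst v = j \<and> f v = c} \<le> 3"
    and "card {v\<in>V. fst v = j \<and> f v = c} + card {v\<in>V. fst v \<noteq> j \<and> f v = c} \<ge> 5 \<Longrightarrow>
         x \<in> {v\<in>V. fst v \<noteq> j \<and> f v = c} \<Longrightarrow> y \<in> {v\<in>V. fst v \<noteq> j \<and> f v = c} \<Longrightarrow> fst x = fst y"
proof -
  let ?C = "{v\<in>V. fst v = j \<and> f v = c}"
  let ?O = "{v\<in>V. fst v \<noteq> j \<and> f v = c}"
  have nb: "card {v\<in>V. fst u \<noteq> fst v \<and> f v = f u} \<le> 3" if "u \<in> V" for u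
    using rc that unfolding rc_iff by auto
  have bound: "card S \<le> 3" if "u \<in> V" "S \<subseteq> {v\<in>V. fst u \<noteq> fst v \<and> f v = f u}" for u S
    using card_mono[OF _ that(2)] nb[OF that(1)] fin by auto
  obtain u where u: "u \<in> V" "fst u = j" "f u = c" using c by auto
  show O3: "card ?O \<le> 3" by (rule bound[OF u(1)]) (use u in auto)
  show "card ?C \<le> 3" if ne: "?O \<noteq> {}"
  proof -
    obtain w where "w \<in> ?O" using ne by blast
    then show ?thesis by (intro bound[of w]) auto
  qed
  assume big: "card ?C + card ?O \<ge> 5" and x: "x \<in> ?O" and y: "y \<in> ?O"
  show "fst x = fst y"
  proof (rule ccontr)
    assume xy: "fst x \<noteq> fst y"
    have finC: "finite ?C" using fin by auto
    have gen: "card ?C + card T \<le> 3" if "w \<in> ?O" "T \<subseteq> ?O" "\<forall>t\<in>T. fst t \<noteq> fst w" "finite T" for w T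
    proof -
      have "?C \<union> T \<subseteq> {v\<in>V. fst w \<noteq> fst v \<and> f v = f w}" using that by auto
      then have "card (?C \<union> T) \<le> 3" using that by (intro bound[of w]) auto
      moreover have "card (?C \<union> T) = card ?C + card T"
        using that finC by (intro card_Un_disjoint) auto
      ultimately show ?thesis by simp
    qed
    show False
    proof (cases "card ?O \<le> 2")
      case True
      have "card ?C + card {y} \<le> 3" using gen[of x "{y}"] x y xy by auto
      then show False using True big by simp
    next
      case False
      have finO: "finite ?O" using fin by auto
      have "\<not> ?O \<subseteq> {x, y}"
      proof
        assume "?O \<subseteq> {x, y}"
        then have "card ?O \<le> card {x, y}" by (intro card_mono) auto
        also have "\<dots> \<le> 2" by (simp add: card_insert_if)
        finally show False using False by simp
      qed
      then obtain z where z: "z \<in> ?O" "z \<notin> {x, y}" by blast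
      show False
      proof (cases "fst z = fst x")
        case False
        have "card ?C + card {y, z} \<le> 3" using gen[of x "{y,z}"] x y z xy False by auto
        moreover have "card {y, z} = 2" using z by auto
        ultimately show False using O3 big by linarith
      next
        case True
        have "card ?C + card {x, z} \<le> 3" using gen[of y "{x,z}"] x y z xy True by auto
        moreover have "card {x, z} = 2" using z by auto
        ultimately show False using O3 big by linarith
      qed
    qed
  qed
qed

lemma good_union:
  assumes "finite S" "finite T" "card S \<le> 3" "card T \<le> 3"
    and "\<forall>x\<in>S. \<forall>y\<in>S. fst x = fst y" "\<forall>x\<in>T. \<forall>y\<in>T. fst x = fst y"
  shows "good (S \<union> T)"
  unfolding good_def
proof
  fix u assume u: "u \<in> S \<union> T"
  show "card {v \<in> S \<union> T. fst v \<noteq> fst u} \<le> 3"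
  proof (cases "u \<in> S")
    case True
    then have "{v \<in> S \<union> T. fst v \<noteq> fst u} \<subseteq> T" using assms(5) by blast
    then have "card {v \<in> S \<union> T. fst v \<noteq> fst u} \<le> card T" by (rule card_mono[OF assms(2)])
    then show ?thesis using assms(4) by linarith
  next
    case False
    then have "u \<in> T" using u by auto
    then have "{v \<in> S \<union> T. fst v \<noteq> fst u} \<subseteq> S" using assms(6) by blast
    then have "card {v \<in> S \<union> T. fst v \<noteq> fst u} \<le> card S" by (rule card_mono[OF assms(1)])
    then show ?thesis using assms(3) by linarith
  qed
qed


lemma construct:
  fixes V :: "(nat \<times> nat) set" and f :: "nat \<times> nat \<Rightarrow> nat"
  assumes fin: "finite V" and rc: "relaxed_coloring 3 V cmp_adj f"
    and P6: "card {v\<in>V. fst v = j} \<ge> 6"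
  shows "\<exists>g. relaxed_coloring 3 V cmp_adj g \<and> g ` V \<subseteq> f ` V \<and> card (g ` {v\<in>V. fst v = j}) = 1"
proof -
  define P where "P = {v\<in>V. fst v = j}"
  define A where "A = f ` P"
  define W where "W = {v\<in>V. fst v \<noteq> j \<and> f v \<in> A}"
  define cP where "cP c = card {v\<in>V. fst v = j \<and> f v = c}" for c
  define cO where "cO c = card {v\<in>V. fst v \<noteq> j \<and> f v = c}" for c
  have finP: "finite P" using fin unfolding P_def by auto
  have finA: "finite A" using finP unfolding A_def by auto
  have finW: "finite W" using fin unfolding W_def by auto
  have Pne: "P \<noteq> {}" using P6 unfolding P_def by (metis card.empty not_numeral_le_zero)
  show ?thesis
  proof (cases "\<exists>a\<in>A. \<forall>w\<in>V. fst w \<noteq> j \<longrightarrow> f w \<noteq> a")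
    case True
    then obtain a where a: "a \<in> A" "\<forall>w\<in>V. fst w \<noteq> j \<longrightarrow> f w \<noteq> a" by blast
    from pure_case[OF fin rc _ a(2)] a(1) show ?thesis unfolding A_def P_def by fastforce
  next
    case nonpure: False
    show ?thesis
    proof (cases "card W \<le> 4 * (card A - 1)")
      case True
      obtain a0 where a0: "a0 \<in> A" using Pne unfolding A_def by blast
      from chunk_case[OF fin rc, of a0 j] a0 True show ?thesis
        unfolding A_def P_def W_def by fastforce
    next
      case False
      have sumP: "card P = (\<Sum>c\<in>A. cP c)"
      proof -
        have "card P = (\<Sum>c\<in>A. card {v\<in>P. f v = c})"
          by (rule fiber_sum) (use finP finA in \<open>auto simp: A_def\<close>)
        also have "\<dots> = (\<Sum>c\<in>A. cP c)"
          by (rule sum.cong) (auto simp: cP_def P_def intro!: arg_cong[where f=card])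
        finally show ?thesis .
      qed
      have sumO: "card W = (\<Sum>c\<in>A. cO c)"
      proof -
        have "card W = (\<Sum>c\<in>A. card {v\<in>W. f v = c})"
          by (rule fiber_sum) (use finW finA in \<open>auto simp: W_def\<close>)
        also have "\<dots> = (\<Sum>c\<in>A. cO c)"
          by (rule sum.cong) (auto simp: cO_def W_def intro!: arg_cong[where f=card])
        finally show ?thesis .
      qed
      have cAP: "c \<in> f ` {v\<in>V. fst v = j}" if "c \<in> A" for c
        using that unfolding A_def P_def .
      have le6: "cP c + cO c \<le> 6" if "c \<in> A" for c
      proof -
        have "{v\<in>V. fst v \<noteq> j \<and> f v = c} \<noteq> {}" using nonpure that by blast
        then have "cP c \<le> 3" using class_facts(2)[OF fin rc cAP[OF that]] unfolding cP_def by blast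
        moreover have "cO c \<le> 3" using class_facts(1)[OF fin rc cAP[OF that]] unfolding cO_def by blast
        ultimately show ?thesis by simp
      qed
      define T where "T = {c\<in>A. cP c + cO c \<ge> 5}"
      have TA: "T \<subseteq> A" unfolding T_def by auto
      have finT: "finite T" using finA TA finite_subset by blast
      have cT: "card T \<ge> 2"
      proof (rule ccontr)
        assume "\<not> card T \<ge> 2"
        then have cT1: "card T \<le> 1" by simp
        have "(\<Sum>c\<in>A. cP c + cO c) = (\<Sum>c\<in>A - T. cP c + cO c) + (\<Sum>c\<in>T. cP c + cO c)"
          by (rule sum.subset_diff[OF TA finA])
        also have "(\<Sum>c\<in>A - T. cP c + cO c) \<le> (\<Sum>c\<in>A - T. 4)"
          by (rule sum_mono) (auto simp: T_def)
        also have "(\<Sum>c\<in>T. cP c + cO c) \<le> (\<Sum>c\<in>T. 6)"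
          by (rule sum_mono) (use le6 TA in auto)
        finally have "(\<Sum>c\<in>A. cP c + cO c) \<le> 4 * card (A - T) + 6 * card T" by simp
        moreover have "card (A - T) = card A - card T" using TA finT by (simp add: card_Diff_subset)
        moreover have "card T \<le> card A" using TA finA by (simp add: card_mono)
        moreover have "(\<Sum>c\<in>A. cP c + cO c) = card P + card W"
          using sumP sumO by (simp add: sum.distrib)
        moreover have "card P \<ge> 6" using P6 unfolding P_def .
        moreover have "card A \<ge> 1" using finA Pne unfolding A_def by (simp add: Suc_leI card_gt_0_iff)
        ultimately show False using False cT1 by linarith
      qed
      obtain a where aT: "a \<in> T" using cT by (metis card.empty ex_in_conv not_numeral_le_zero)
      have "card (T - {a}) \<ge> 1" using cT aT finT by (simp add: card_Diff_singleton)
      then obtain b where bT: "b \<in> T" "b \<noteq> a" by (metis card.empty ex_in_conv not_one_le_zero DiffE insertI1)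
      have sp: "\<forall>x\<in>{v\<in>V. fst v \<noteq> j \<and> f v = c}. \<forall>y\<in>{v\<in>V. fst v \<noteq> j \<and> f v = c}. fst x = fst y"
        if "c \<in> T" for c
      proof -
        have cA: "c \<in> A" using that TA by auto
        have "card {v\<in>V. fst v = j \<and> f v = c} + card {v\<in>V. fst v \<noteq> j \<and> f v = c} \<ge> 5"
          using that unfolding T_def cP_def cO_def by auto
        then show ?thesis using class_facts(3)[OF fin rc cAP[OF cA]] by blast
      qed
      have gd: "good ({v\<in>V. fst v \<noteq> j \<and> f v = a} \<union> {v\<in>V. fst v \<noteq> j \<and> f v = b})"
      proof (rule good_union)
        show "finite {v\<in>V. fst v \<noteq> j \<and> f v = a}" "finite {v\<in>V. fst v \<noteq> j \<and> f v = b}"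
          using fin by auto
        show "card {v\<in>V. fst v \<noteq> j \<and> f v = a} \<le> 3" "card {v\<in>V. fst v \<noteq> j \<and> f v = b} \<le> 3"
          using class_facts(1)[OF fin rc cAP] TA aT bT by auto
        show "\<forall>x\<in>{v\<in>V. fst v \<noteq> j \<and> f v = a}. \<forall>y\<in>{v\<in>V. fst v \<noteq> j \<and> f v = a}. fst x = fst y"
          by (rule sp[OF aT])
        show "\<forall>x\<in>{v\<in>V. fst v \<noteq> j \<and> f v = b}. \<forall>y\<in>{v\<in>V. fst v \<noteq> j \<and> f v = b}. fst x = fst y"
          by (rule sp[OF bT(1)])
      qed
      have bV: "b \<in> f ` V" using bT TA unfolding A_def P_def by auto
      from merge_case[OF fin rc cAP bV _ gd] aT bT TA show ?thesis by fastforce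
    qed
  qed
qed


theorem lemma5p1:
  fixes s :: nat and n :: "nat \<Rightarrow> nat"
  assumes "s \<ge> 2"
    and "\<forall>j<s. n j \<ge> 1"
    and "\<exists>j<s. n j \<ge> 6"
  shows "\<exists>f j. optimal_relaxed_coloring 3 (cmp_vertices s n) cmp_adj f
           \<and> j < s \<and> n j \<ge> 6 \<and> card (f ` cmp_part n j) = 1"
proof -
  let ?V = "cmp_vertices s n"
  obtain j where j: "j < s" "n j \<ge> 6" using assms(3) by blast
  have Vs: "?V = Sigma {..<s} (\<lambda>j. {..<n j})" unfolding cmp_vertices_def by auto
  have fin: "finite ?V" unfolding Vs by auto
  have Pe: "cmp_part n j = {v\<in>?V. fst v = j}" using j(1) unfolding cmp_part_def cmp_vertices_def by auto
  have "cmp_part n j = {j} \<times> {..<n j}" unfolding cmp_part_def by auto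
  then have cP: "card {v\<in>?V. fst v = j} = n j" using Pe by (simp add: card_cartesian_product)
  have ex: "\<exists>m. \<exists>f. relaxed_coloring 3 ?V cmp_adj f \<and> card (f ` ?V) = m"
  proof -
    have "{v \<in> ?V. fst u \<noteq> fst v \<and> fst v = fst u} = {}" for u by auto
    then have "relaxed_coloring 3 ?V cmp_adj fst" unfolding rc_iff by (metis card.empty zero_le)
    then show ?thesis by blast
  qed
  obtain f where f: "relaxed_coloring 3 ?V cmp_adj f" "card (f ` ?V) = relaxed_chromatic 3 ?V cmp_adj"
    using LeastI_ex[OF ex] unfolding relaxed_chromatic_def by blast
  obtain g where g: "relaxed_coloring 3 ?V cmp_adj g" "g ` ?V \<subseteq> f ` ?V" "card (g ` {v\<in>?V. fst v = j}) = 1"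
    using construct[OF fin f(1), of j] cP j(2) by auto
  have "card (g ` ?V) \<le> card (f ` ?V)" using g(2) fin by (simp add: card_mono)
  moreover have "relaxed_chromatic 3 ?V cmp_adj \<le> card (g ` ?V)"
    unfolding relaxed_chromatic_def by (rule Least_le) (use g(1) in blast)
  ultimately have "optimal_relaxed_coloring 3 ?V cmp_adj g"
    unfolding optimal_relaxed_coloring_def using g(1) f(2) by simp
  then show ?thesis using j g(3) Pe by metis
qed

end
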